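(* Let $H_1,H_2$ be complex Hilbert spaces and let $T$ be a densely defined closed operator from $H_1$ to $H_2$. Then for each $\epsilon>0$ there exists $S\in\mathcal B(H_1,H_2)$ with $\|S\|\leq\epsilon$ such that $S+T$ (with domain $D(T)$) is minimum attaining and $\theta(S+T,T)\leq\epsilon$. Moreover, if $m(T)>0$, then $S$ can be chosen to be a rank one operator.
   Context: Hilbert spaces are complex and infinite dimensional. For a densely defined closed operator $A$ with domain $D(A)$, the minimum modulus is $m(A)=\inf\{\|Ax\|: x\in D(A),\ \|x\|=1\}$, and $A$ is called minimum attaining if there exists $x_0\in D(A)$ with $\|x_0\|=1$ and $\|Ax_0\|=m(A)$. The graph of $A$ is $G(A)=\{(Ax,x):x\in D(A)\}$; the gap between densely defined closed operators $A,B$ is $\theta(A,B)=\|P_{G(A)}-P_{G(B)}\|$, where $P_M$ is the orthogonal projection onto the closed subspace $M$. *)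

theory Defs
  imports "HOL-Analysis.Analysis"
begin

text \<open>Complex Hilbert spaces: a real inner product space that is complete and carries a
  complex scalar multiplication compatible with the real one and with the norm.
  (By polarization this is exactly a complex Hilbert space; the real inner product is
  the real part of the complex one.)\<close>

class complex_hilbert = real_inner + complete_space +
  fixes scaleC :: "complex \<Rightarrow> 'a \<Rightarrow> 'a" (infixr \<open>*\<^sub>C\<close> 75)
  assumes scaleC_add_right: "scaleC a (x + y) = scaleC a x + scaleC a y"
    and scaleC_add_left: "scaleC (a + b) x = scaleC a x + scaleC b x"
    and scaleC_scaleC: "scaleC a (scaleC b x) = scaleC (a * b) x"
    and scaleC_one: "scaleC 1 x = x"
    and scaleR_scaleC: "scaleR r x = scaleC (complex_of_real r) x"
    and norm_scaleC: "norm (scaleC a x) = cmod a * norm x"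

definition infinite_dimensional :: "'a::complex_hilbert itself \<Rightarrow> bool" where
  "infinite_dimensional _ \<longleftrightarrow> \<not> (\<exists>B::'a set. finite B \<and> span B = UNIV)"

definition csubspace :: "'a::complex_hilbert set \<Rightarrow> bool" where
  "csubspace S \<longleftrightarrow> 0 \<in> S \<and> (\<forall>x\<in>S. \<forall>y\<in>S. x + y \<in> S) \<and> (\<forall>c. \<forall>x\<in>S. c *\<^sub>C x \<in> S)"

definition graph :: "('a::complex_hilbert \<Rightarrow> 'b::complex_hilbert) \<Rightarrow> 'a set \<Rightarrow> ('b \<times> 'a) set" where
  "graph T D = {(T x, x) | x. x \<in> D}"

definition densely_defined_closed :: "('a::complex_hilbert \<Rightarrow> 'b::complex_hilbert) \<Rightarrow> 'a set \<Rightarrow> bool" where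
  "densely_defined_closed T D \<longleftrightarrow>
     csubspace D \<and> closure D = UNIV \<and>
     (\<forall>x\<in>D. \<forall>y\<in>D. T (x + y) = T x + T y) \<and>
     (\<forall>c. \<forall>x\<in>D. T (c *\<^sub>C x) = c *\<^sub>C T x) \<and>
     closed (graph T D)"

definition bounded_clinear_op :: "('a::complex_hilbert \<Rightarrow> 'b::complex_hilbert) \<Rightarrow> bool" where
  "bounded_clinear_op S \<longleftrightarrow>
     (\<forall>x y. S (x + y) = S x + S y) \<and> (\<forall>c x. S (c *\<^sub>C x) = c *\<^sub>C S x) \<and>
     (\<exists>K. \<forall>x. norm (S x) \<le> norm x * K)"

definition rank_one :: "('a::complex_hilbert \<Rightarrow> 'b::complex_hilbert) \<Rightarrow> bool" where
  "rank_one S \<longleftrightarrow> (\<exists>u. u \<noteq> 0 \<and> range S = {c *\<^sub>C u | c. True})"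

definition min_modulus :: "('a::complex_hilbert \<Rightarrow> 'b::complex_hilbert) \<Rightarrow> 'a set \<Rightarrow> real" where
  "min_modulus T D = Inf {norm (T x) | x. x \<in> D \<and> norm x = 1}"

definition min_attaining :: "('a::complex_hilbert \<Rightarrow> 'b::complex_hilbert) \<Rightarrow> 'a set \<Rightarrow> bool" where
  "min_attaining T D \<longleftrightarrow> (\<exists>x0\<in>D. norm x0 = 1 \<and> norm (T x0) = min_modulus T D)"

definition orth_proj :: "'a::real_inner set \<Rightarrow> 'a \<Rightarrow> 'a" where
  "orth_proj M x = (THE y. y \<in> M \<and> (\<forall>z\<in>M. inner (x - y) z = 0))"

definition gap :: "('a::complex_hilbert \<Rightarrow> 'b::complex_hilbert) \<Rightarrow> 'a set \<Rightarrow> ('a \<Rightarrow> 'b) \<Rightarrow> 'a set \<Rightarrow> real" where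
  "gap A DA B DB = onorm (\<lambda>p. orth_proj (graph A DA) p - orth_proj (graph B DB) p)"

end

theory Submission
  imports Defs
begin

lemma scaleC_real: "complex_of_real r *\<^sub>C x = r *\<^sub>R (x::'a::complex_hilbert)"
  by (simp add: scaleR_scaleC)

lemma scaleC_zero_left [simp]: "0 *\<^sub>C (x::'a::complex_hilbert) = 0"
  by (metis of_real_0 scaleC_real scaleR_zero_left)

lemma scaleC_expand: "c *\<^sub>C (x::'a::complex_hilbert) = Re c *\<^sub>R x + Im c *\<^sub>R (\<i> *\<^sub>C x)"
proof -
  have "c = complex_of_real (Re c) + complex_of_real (Im c) * \<i>"
    by (simp add: complex_eq_iff)
  then have "c *\<^sub>C x = complex_of_real (Re c) *\<^sub>C x + complex_of_real (Im c) *\<^sub>C (\<i> *\<^sub>C x)"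
    by (metis scaleC_add_left scaleC_scaleC)
  then show ?thesis by (simp add: scaleC_real)
qed

lemma norm_iC [simp]: "norm (\<i> *\<^sub>C (x::'a::complex_hilbert)) = norm x"
  by (simp add: norm_scaleC)

lemma iC_iC [simp]: "\<i> *\<^sub>C \<i> *\<^sub>C (x::'a::complex_hilbert) = - x"
proof -
  have "\<i> *\<^sub>C \<i> *\<^sub>C x = complex_of_real (-1) *\<^sub>C x" by (simp add: scaleC_scaleC)
  also have "\<dots> = (-1) *\<^sub>R x" by (rule scaleC_real)
  finally show ?thesis by simp
qed

lemma norm_add_sq: "(norm (a + b))\<^sup>2 = (norm a)\<^sup>2 + (norm b)\<^sup>2 + 2 * inner a (b::'a::real_inner)"
  by (simp add: power2_norm_eq_inner inner_add_left inner_add_right inner_commute)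

lemma inner_iC_iC [simp]: "inner (\<i> *\<^sub>C x) (\<i> *\<^sub>C y) = inner x (y::'a::complex_hilbert)"
proof -
  have "norm (\<i> *\<^sub>C (x + y)) = norm (x + y)" by simp
  then have "(norm (\<i> *\<^sub>C x + \<i> *\<^sub>C y))\<^sup>2 = (norm (x + y))\<^sup>2" by (simp add: scaleC_add_right)
  then show ?thesis
    unfolding norm_add_sq by simp
qed

lemma inner_iC_left: "inner (\<i> *\<^sub>C x) y = - inner x (\<i> *\<^sub>C (y::'a::complex_hilbert))"
  using inner_iC_iC[of x "\<i> *\<^sub>C y"] by simp

lemma inner_iC_right: "inner p (\<i> *\<^sub>C x) = - inner x (\<i> *\<^sub>C (p::'a::complex_hilbert))"
  by (metis inner_commute inner_iC_left)

lemma inner_iC_self [simp]: "inner x (\<i> *\<^sub>C (x::'a::complex_hilbert)) = 0"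
  using inner_iC_left[of x x] by (simp add: inner_commute)

lemma inner_iC_self' [simp]: "inner (\<i> *\<^sub>C (x::'a::complex_hilbert)) x = 0"
  using inner_iC_self[of x] by (simp add: inner_commute)

lemma inner_scaleC_left: "inner (c *\<^sub>C x) y = inner x (cnj c *\<^sub>C (y::'a::complex_hilbert))"
  by (simp add: scaleC_expand[of c] scaleC_expand[of "cnj c"] inner_add_left inner_add_right inner_iC_left inner_diff_right)

lemma scaleC_minus_right: "c *\<^sub>C (- x) = - (c *\<^sub>C (x::'a::complex_hilbert))"
proof -
  have "c *\<^sub>C x + c *\<^sub>C (- x) = 0"
    by (metis add.right_inverse scaleC_add_right scaleC_scaleC scaleC_zero_left mult_zero_right)
  then show ?thesis using minus_unique by metis
qed

lemma scaleC_diff_right: "c *\<^sub>C (x - y) = c *\<^sub>C x - c *\<^sub>C (y::'a::complex_hilbert)"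
  by (metis diff_conv_add_uminus scaleC_add_right scaleC_minus_right)

lemma scaleC_zero_right [simp]: "c *\<^sub>C (0::'a::complex_hilbert) = 0"
  by (metis scaleC_scaleC scaleC_zero_left mult_zero_right)

lemma scaleC_scaleR: "c *\<^sub>C (r *\<^sub>R x) = r *\<^sub>R (c *\<^sub>C (x::'a::complex_hilbert))"
  by (simp add: scaleR_scaleC scaleC_scaleC mult.commute)

lemma scaleC_minus_left [simp]: "(- c) *\<^sub>C x = - (c *\<^sub>C (x::'a::complex_hilbert))"
proof -
  have "(- c) *\<^sub>C x = (-1) *\<^sub>C (c *\<^sub>C x)" by (simp add: scaleC_scaleC)
  also have "\<dots> = complex_of_real (-1) *\<^sub>C (c *\<^sub>C x)" by simp
  also have "\<dots> = - (c *\<^sub>C x)" unfolding scaleC_real by simp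
  finally show ?thesis .
qed

definition phi :: "'a::complex_hilbert \<Rightarrow> 'a \<Rightarrow> complex" where
  "phi p x = Complex (inner x p) (inner x (\<i> *\<^sub>C p))"

lemma phi_add: "phi p (x + y) = phi p x + phi p y"
  by (simp add: phi_def inner_add_left complex_eq_iff)

lemma phi_scaleC: "phi p (c *\<^sub>C x) = c * phi p x"
  by (simp add: phi_def complex_eq_iff inner_scaleC_left scaleC_expand[of "cnj c"] inner_add_right
       inner_iC_left scaleC_expand[of c] inner_add_left algebra_simps inner_minus_right inner_diff_right)

lemma phi_self: "norm p = 1 \<Longrightarrow> phi p p = 1"
  by (simp add: phi_def complex_eq_iff flip: power2_norm_eq_inner)


lemma phi_scaleC_p: "phi p x *\<^sub>C p = inner x p *\<^sub>R p + inner x (\<i> *\<^sub>C p) *\<^sub>R (\<i> *\<^sub>C p)"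
  by (subst scaleC_expand) (simp add: phi_def)

lemma inner_phi: "inner x (phi p x *\<^sub>C p) = (cmod (phi p x))\<^sup>2"
  unfolding phi_scaleC_p cmod_power2 by (simp add: phi_def inner_add_right power2_eq_square)

lemma norm_phi: assumes "norm p = 1" shows "cmod (phi p x) \<le> norm x"
proof -
  have "(cmod (phi p x))\<^sup>2 \<le> norm x * norm (phi p x *\<^sub>C p)"
    unfolding inner_phi[symmetric] by (rule Cauchy_Schwarz_ineq2[THEN order_trans[OF abs_ge_self]])
  also have "\<dots> = norm x * cmod (phi p x)" by (simp add: norm_scaleC assms)
  finally show ?thesis
    by (cases "cmod (phi p x) = 0") (auto simp: power2_eq_square)
qed

lemma inner_scaleC_p_orth:
  assumes "norm p = 1"
  shows "inner (c *\<^sub>C p) (x - phi p x *\<^sub>C p) = 0"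
  using assms
  unfolding phi_scaleC_p
  apply (simp add: scaleC_expand[of c] inner_add_left inner_add_right inner_diff_right inner_iC_left
        algebra_simps flip: power2_norm_eq_inner)
  using inner_iC_right[of p x] inner_commute[of p x] by (simp add: algebra_simps)

definition rsub :: "'c::real_inner set \<Rightarrow> bool" where
  "rsub M \<longleftrightarrow> 0 \<in> M \<and> (\<forall>x\<in>M. \<forall>y\<in>M. x + y \<in> M) \<and> (\<forall>r. \<forall>x\<in>M. r *\<^sub>R x \<in> M) \<and> closed M"

lemma rsub_add: "rsub M \<Longrightarrow> x \<in> M \<Longrightarrow> y \<in> M \<Longrightarrow> x + y \<in> M" by (auto simp: rsub_def)
lemma rsub_scale: "rsub M \<Longrightarrow> x \<in> M \<Longrightarrow> r *\<^sub>R x \<in> M" by (auto simp: rsub_def)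
lemma rsub_zero: "rsub M \<Longrightarrow> 0 \<in> M" by (auto simp: rsub_def)
lemma rsub_closed: "rsub M \<Longrightarrow> closed M" by (auto simp: rsub_def)
lemma rsub_diff: "rsub M \<Longrightarrow> x \<in> M \<Longrightarrow> y \<in> M \<Longrightarrow> x - y \<in> M"
  using rsub_add[of M x "(-1) *\<^sub>R y"] rsub_scale[of M y "-1"] by simp

lemma parallelogram: "(norm (a + b))\<^sup>2 + (norm (a - b))\<^sup>2 = 2 * (norm a)\<^sup>2 + 2 * (norm (b::'c::real_inner))\<^sup>2"
proof -
  have e: "a - b = a + (- b)" by simp
  have "(norm (a - b))\<^sup>2 = (norm a)\<^sup>2 + (norm b)\<^sup>2 - 2 * inner a b"
    unfolding e norm_add_sq by (simp add: inner_minus_right)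
  then show ?thesis unfolding norm_add_sq by simp
qed

lemma sq_aux: "(s::real) > 0 \<Longrightarrow> (d + 1/s)\<^sup>2 = d\<^sup>2 + (2*d + 1/s)/s"
  by (simp add: field_simps power2_eq_square)

lemma proj_exists:
  fixes M :: "'c::{real_inner,complete_space} set"
  assumes M: "rsub M"
  shows "\<exists>y\<in>M. \<forall>z\<in>M. inner (x - y) z = 0"
proof -
  define d where "d = Inf ((\<lambda>y. norm (x - y)) ` M)"
  have ne: "(\<lambda>y. norm (x - y)) ` M \<noteq> {}" using rsub_zero[OF M] by auto
  have bdd: "bdd_below ((\<lambda>y. norm (x - y)) ` M)" by (rule bdd_belowI[of _ 0]) auto
  have dle: "d \<le> norm (x - y)" if "y \<in> M" for y unfolding d_def using bdd that by (auto intro: cInf_lower)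
  have d0: "0 \<le> d" unfolding d_def using ne by (auto intro: cInf_greatest)
  have "\<exists>y\<in>M. norm (x - y) < d + 1 / real (Suc n)" for n
  proof -
    have "Inf ((\<lambda>y. norm (x - y)) ` M) < d + 1 / real (Suc n)" unfolding d_def by simp
    from cInf_lessD[OF ne this] show ?thesis by auto
  qed
  then obtain y where yM: "\<And>n. y n \<in> M" and yd: "\<And>n. norm (x - y n) < d + 1 / real (Suc n)"
    by metis
  have sq: "(norm (x - y n))\<^sup>2 \<le> d\<^sup>2 + (2 * d + 1) / real (Suc n)" for n
  proof -
    have "(norm (x - y n))\<^sup>2 \<le> (d + 1 / real (Suc n))\<^sup>2"
      using yd[of n] by (intro power_mono) auto
    also have "\<dots> = d\<^sup>2 + (2 * d + 1 / real (Suc n)) / real (Suc n)"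
      by (rule sq_aux) simp
    also have "\<dots> \<le> d\<^sup>2 + (2 * d + 1) / real (Suc n)"
      by (intro add_left_mono divide_right_mono) auto
    finally show ?thesis .
  qed
  have key: "(norm (y n - y k))\<^sup>2 \<le> 2 * (2 * d + 1) * (1 / real (Suc n) + 1 / real (Suc k))" for n k
  proof -
    define mid where "mid = (1/2) *\<^sub>R (y n + y k)"
    have "mid \<in> M" unfolding mid_def by (intro rsub_scale[OF M] rsub_add[OF M] yM)
    then have dm: "d \<le> norm (x - mid)" by (rule dle)
    have "(x - y n) + (x - y k) = 2 *\<^sub>R (x - mid)" unfolding mid_def by (simp add: algebra_simps scaleR_2)
    then have "norm ((x - y n) + (x - y k)) = 2 * norm (x - mid)" by simp
    then have a: "4 * d\<^sup>2 \<le> (norm ((x - y n) + (x - y k)))\<^sup>2"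
      using dm d0 by (simp add: power2_eq_square mult_mono)
    have b: "(x - y n) - (x - y k) = y k - y n" by simp
    have "(norm (y n - y k))\<^sup>2 = (norm (y k - y n))\<^sup>2" by (simp add: norm_minus_commute)
    also have "\<dots> = 2 * (norm (x - y n))\<^sup>2 + 2 * (norm (x - y k))\<^sup>2 - (norm ((x - y n) + (x - y k)))\<^sup>2"
      using parallelogram[of "x - y n" "x - y k"] b by simp
    also have "\<dots> \<le> 2 * (d\<^sup>2 + (2 * d + 1) / real (Suc n)) + 2 * (d\<^sup>2 + (2 * d + 1) / real (Suc k)) - 4 * d\<^sup>2"
      using sq[of n] sq[of k] a by (smt (verit))
    also have "\<dots> = 2 * (2 * d + 1) * (1 / real (Suc n) + 1 / real (Suc k))"
      by (simp add: algebra_simps add_divide_distrib)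
    finally show ?thesis .
  qed
  have "Cauchy y"
  proof (rule metric_CauchyI)
    fix e :: real assume e: "e > 0"
    obtain N where N: "4 * (2 * d + 1) / e\<^sup>2 < real N" using reals_Archimedean2 by blast
    have N': "4 * (2 * d + 1) / real (Suc N) < e\<^sup>2"
    proof -
      have "4 * (2 * d + 1) < e\<^sup>2 * real N" using N e by (simp add: field_simps)
      also have "\<dots> \<le> e\<^sup>2 * real (Suc N)" using e by simp
      finally show ?thesis by (simp add: field_simps)
    qed
    show "\<exists>N. \<forall>m\<ge>N. \<forall>n\<ge>N. dist (y m) (y n) < e"
    proof (intro exI allI impI)
      fix m n assume mn: "N \<le> m" "N \<le> n"
      have "1 / real (Suc m) \<le> 1 / real (Suc N)" "1 / real (Suc n) \<le> 1 / real (Suc N)"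
        using mn by (auto intro!: divide_left_mono)
      then have "2 * (2 * d + 1) * (1 / real (Suc m) + 1 / real (Suc n)) \<le> 2 * (2 * d + 1) * (2 / real (Suc N))"
        using d0 by (intro mult_left_mono) auto
      also have "\<dots> = 4 * (2 * d + 1) / real (Suc N)" by simp
      finally have "2 * (2 * d + 1) * (1 / real (Suc m) + 1 / real (Suc n)) \<le> 4 * (2 * d + 1) / real (Suc N)" .
      then have "(dist (y m) (y n))\<^sup>2 < e\<^sup>2" using key[of m n] N' by (simp add: dist_norm)
      then show "dist (y m) (y n) < e" using e by (simp add: power_less_imp_less_base)
    qed
  qed
  then obtain L where L: "y \<longlonglongrightarrow> L" using Cauchy_convergent_iff convergent_def by blast
  have LM: "L \<in> M" using rsub_closed[OF M] L yM by (auto simp: closed_sequential_limits)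
  have Lmin: "norm (x - L) \<le> norm (x - z)" if z: "z \<in> M" for z
  proof (rule LIMSEQ_le)
    show "(\<lambda>n. norm (x - y n)) \<longlonglongrightarrow> norm (x - L)" by (intro tendsto_intros L)
    show "(\<lambda>n. norm (x - z) + inverse (real (Suc n))) \<longlonglongrightarrow> norm (x - z)"
      using tendsto_add[OF tendsto_const LIMSEQ_inverse_real_of_nat] by simp
    show "\<exists>N. \<forall>n\<ge>N. norm (x - y n) \<le> norm (x - z) + inverse (real (Suc n))"
    proof (intro exI allI impI)
      fix n :: nat
      have "norm (x - y n) < d + 1 / real (Suc n)" by (rule yd)
      then show "norm (x - y n) \<le> norm (x - z) + inverse (real (Suc n))"
        using dle[OF z] by (simp add: divide_inverse)
    qed
  qed
  have "inner (x - L) z = 0" if z: "z \<in> M" for z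
  proof (cases "z = 0")
    case True then show ?thesis by simp
  next
    case False
    define a where "a = inner (x - L) z"
    define b where "b = (norm z)\<^sup>2"
    have b0: "b > 0" using False by (simp add: b_def)
    define t where "t = a / b"
    have "L + t *\<^sub>R z \<in> M" by (intro rsub_add[OF M] rsub_scale[OF M] LM z)
    then have "norm (x - L) \<le> norm (x - (L + t *\<^sub>R z))" by (rule Lmin)
    also have "x - (L + t *\<^sub>R z) = (x - L) + (- (t *\<^sub>R z))" by simp
    finally have "(norm (x - L))\<^sup>2 \<le> (norm ((x - L) + (- (t *\<^sub>R z))))\<^sup>2"
      by (intro power_mono) auto
    also have "\<dots> = (norm (x - L))\<^sup>2 - 2 * t * a + t\<^sup>2 * b"
      unfolding norm_add_sq by (simp add: a_def b_def inner_minus_right power_mult_distrib)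
    finally have "0 \<le> - 2 * t * a + t\<^sup>2 * b" by simp
    also have "- 2 * t * a + t\<^sup>2 * b = - a\<^sup>2 / b" using b0 by (simp add: t_def power2_eq_square field_simps)
    finally have "a\<^sup>2 / b \<le> 0" by simp
    then have "a\<^sup>2 \<le> 0" using b0 by (simp add: divide_le_0_iff)
    then show ?thesis by (simp add: a_def)
  qed
  with LM show ?thesis by blast
qed

lemma orth_proj_unique:
  fixes M :: "'c::{real_inner,complete_space} set"
  assumes M: "rsub M" and y: "y \<in> M" "\<forall>z\<in>M. inner (x - y) z = 0"
  shows "orth_proj M x = y"
  unfolding orth_proj_def
proof (rule the_equality)
  show "y \<in> M \<and> (\<forall>z\<in>M. inner (x - y) z = 0)" using y by blast
  fix y' assume y': "y' \<in> M \<and> (\<forall>z\<in>M. inner (x - y') z = 0)"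
  have d: "y' - y \<in> M" using rsub_diff[OF M] y y' by blast
  have "inner (y' - y) (y' - y) = inner (x - y) (y' - y) - inner (x - y') (y' - y)"
    by (simp add: inner_diff_left)
  also have "\<dots> = 0" using y y' d by simp
  finally show "y' = y" by simp
qed

lemma orth_proj:
  fixes M :: "'c::{real_inner,complete_space} set"
  assumes M: "rsub M"
  shows "orth_proj M x \<in> M" "\<And>z. z \<in> M \<Longrightarrow> inner (x - orth_proj M x) z = 0"
proof -
  obtain y where "y \<in> M" "\<forall>z\<in>M. inner (x - y) z = 0" using proj_exists[OF M] by blast
  with orth_proj_unique[OF M this] show "orth_proj M x \<in> M" "\<And>z. z \<in> M \<Longrightarrow> inner (x - orth_proj M x) z = 0"
    by auto
qed

lemma proj_dist:
  fixes M :: "'c::{real_inner,complete_space} set"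
  assumes M: "rsub M" and g: "g \<in> M"
  shows "norm (w - orth_proj M w) \<le> norm (w - g)"
proof -
  have e: "w - g = (w - orth_proj M w) + (orth_proj M w - g)" by simp
  have "orth_proj M w - g \<in> M" using rsub_diff[OF M orth_proj(1)[OF M] g] .
  then have o: "inner (w - orth_proj M w) (orth_proj M w - g) = 0" by (rule orth_proj(2)[OF M])
  have "(norm (w - g))\<^sup>2 = (norm (w - orth_proj M w))\<^sup>2 + (norm (orth_proj M w - g))\<^sup>2"
    unfolding e norm_add_sq o by simp
  then have "(norm (w - orth_proj M w))\<^sup>2 \<le> (norm (w - g))\<^sup>2" by simp
  then show ?thesis by (rule power2_le_imp_le) simp
qed

lemma proj_diff:
  fixes M :: "'c::{real_inner,complete_space} set"
  assumes M: "rsub M"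
  shows "orth_proj M (a - b) = orth_proj M a - orth_proj M b"
proof (rule orth_proj_unique[OF M])
  show "orth_proj M a - orth_proj M b \<in> M" by (intro rsub_diff[OF M] orth_proj(1)[OF M])
  show "\<forall>z\<in>M. inner (a - b - (orth_proj M a - orth_proj M b)) z = 0"
  proof
    fix z assume z: "z \<in> M"
    have "a - b - (orth_proj M a - orth_proj M b) = (a - orth_proj M a) - (b - orth_proj M b)" by simp
    then show "inner (a - b - (orth_proj M a - orth_proj M b)) z = 0"
      using orth_proj(2)[OF M z, of a] orth_proj(2)[OF M z, of b] by (simp add: inner_diff_left)
  qed
qed

lemma gap_abstract:
  fixes G1 G2 :: "'c::{real_inner,complete_space} set"
  assumes M1: "rsub G1" and M2: "rsub G2" and e: "e \<ge> 0"
    and h1: "\<And>w. w \<in> G1 \<Longrightarrow> \<exists>g\<in>G2. norm (w - g) \<le> e * norm w"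
    and h2: "\<And>w. w \<in> G2 \<Longrightarrow> \<exists>g\<in>G1. norm (w - g) \<le> e * norm w"
  shows "onorm (\<lambda>z. orth_proj G1 z - orth_proj G2 z) \<le> e"
proof (rule onorm_bound[OF e])
  fix z
  define P1 where "P1 = orth_proj G1"
  define P2 where "P2 = orth_proj G2"
  have P1: "P1 x \<in> G1" "\<And>g. g \<in> G1 \<Longrightarrow> inner (x - P1 x) g = 0" for x
    unfolding P1_def using orth_proj[OF M1] by auto
  have P2: "P2 x \<in> G2" "\<And>g. g \<in> G2 \<Longrightarrow> inner (x - P2 x) g = 0" for x
    unfolding P2_def using orth_proj[OF M2] by auto
  have A: "norm (w - P2 w) \<le> e * norm w" if ww: "w \<in> G1" for w
  proof -
    obtain g where "g \<in> G2" "norm (w - g) \<le> e * norm w" using h1[OF ww] by blast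
    then show ?thesis using proj_dist[OF M2, of g w] unfolding P2_def by linarith
  qed
  have B: "norm (w - P1 w) \<le> e * norm w" if ww: "w \<in> G2" for w
  proof -
    obtain g where "g \<in> G1" "norm (w - g) \<le> e * norm w" using h2[OF ww] by blast
    then show ?thesis using proj_dist[OF M1, of g w] unfolding P1_def by linarith
  qed
  define e1 where "e1 = z - P2 z"
  define w where "w = P1 e1"
  define f where "f = P2 z - P1 (P2 z)"
  have diff: "P1 z - P2 z = w + (- f)"
    unfolding w_def f_def e1_def P1_def using proj_diff[OF M1, of z "P2 z"] by simp
  have wG1: "w \<in> G1" unfolding w_def by (rule P1)
  have wf: "inner w (- f) = 0" unfolding f_def using P1(2)[OF wG1, of "P2 z"]
    by (simp add: inner_commute inner_minus_right inner_diff_right)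
  have fb: "norm f \<le> e * norm (P2 z)" unfolding f_def by (rule B[OF P2(1)])
  have e1o: "inner e1 g = 0" if "g \<in> G2" for g unfolding e1_def by (rule P2(2)[OF that])
  have "(norm w)\<^sup>2 = inner e1 w"
    using P1(2)[OF wG1, of e1] unfolding w_def[symmetric]
    by (simp add: inner_diff_left power2_norm_eq_inner)
  also have "\<dots> = inner e1 (w - P2 w)" using e1o[OF P2(1)[of w]] by (simp add: inner_diff_right)
  also have "\<dots> \<le> norm e1 * norm (w - P2 w)"
    by (rule order_trans[OF abs_ge_self Cauchy_Schwarz_ineq2])
  also have "\<dots> \<le> norm e1 * (e * norm w)" by (intro mult_left_mono A wG1) simp
  finally have "norm w * norm w \<le> (e * norm e1) * norm w" by (simp add: power2_eq_square algebra_simps)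
  then have wb: "norm w \<le> e * norm e1"
    by (cases "norm w = 0") (auto simp: mult_le_cancel_right e)
  have zz: "(norm z)\<^sup>2 = (norm e1)\<^sup>2 + (norm (P2 z))\<^sup>2"
  proof -
    have "z = e1 + P2 z" unfolding e1_def by simp
    then have "(norm z)\<^sup>2 = (norm (e1 + P2 z))\<^sup>2" by simp
    also have "\<dots> = (norm e1)\<^sup>2 + (norm (P2 z))\<^sup>2" unfolding norm_add_sq e1o[OF P2(1)] by simp
    finally show ?thesis .
  qed
  have "(norm (P1 z - P2 z))\<^sup>2 = (norm w)\<^sup>2 + (norm f)\<^sup>2"
    unfolding diff norm_add_sq wf by simp
  also have "\<dots> \<le> (e * norm e1)\<^sup>2 + (e * norm (P2 z))\<^sup>2"
    by (intro add_mono power_mono wb fb) auto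
  also have "\<dots> = (e * norm z)\<^sup>2" unfolding power_mult_distrib zz by (simp add: algebra_simps)
  finally have "norm (P1 z - P2 z) \<le> e * norm z" by (rule power2_le_imp_le) (simp add: e)
  then show "norm (orth_proj G1 z - orth_proj G2 z) \<le> e * norm z" unfolding P1_def P2_def .
qed

locale ddc =
  fixes T :: "'a::complex_hilbert \<Rightarrow> 'b::complex_hilbert" and D :: "'a set"
  assumes ddc: "densely_defined_closed T D"
begin

lemma D_add: "x \<in> D \<Longrightarrow> y \<in> D \<Longrightarrow> x + y \<in> D"
  using ddc by (auto simp: densely_defined_closed_def csubspace_def)
lemma D_scaleC: "x \<in> D \<Longrightarrow> c *\<^sub>C x \<in> D"
  using ddc by (auto simp: densely_defined_closed_def csubspace_def)
lemma D_zero: "0 \<in> D"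
  using ddc by (auto simp: densely_defined_closed_def csubspace_def)
lemma D_scaleR: "x \<in> D \<Longrightarrow> r *\<^sub>R x \<in> D"
  by (simp add: scaleR_scaleC D_scaleC)
lemma D_diff: "x \<in> D \<Longrightarrow> y \<in> D \<Longrightarrow> x - y \<in> D"
  using D_add[of x "(-1) *\<^sub>R y"] D_scaleR[of y "-1"] by simp
lemma D_dense: "closure D = UNIV"
  using ddc by (auto simp: densely_defined_closed_def)
lemma T_add: "x \<in> D \<Longrightarrow> y \<in> D \<Longrightarrow> T (x + y) = T x + T y"
  using ddc by (auto simp: densely_defined_closed_def)
lemma T_scaleC: "x \<in> D \<Longrightarrow> T (c *\<^sub>C x) = c *\<^sub>C T x"
  using ddc by (auto simp: densely_defined_closed_def)
lemma T_scaleR: "x \<in> D \<Longrightarrow> T (r *\<^sub>R x) = r *\<^sub>R T x"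
  by (simp add: scaleR_scaleC T_scaleC)
lemma T_zero: "T 0 = 0"
  using T_scaleR[OF D_zero, of 0] by simp
lemma T_diff: "x \<in> D \<Longrightarrow> y \<in> D \<Longrightarrow> T (x - y) = T x - T y"
  using T_add[of "x - y" y] D_diff[of x y] by (simp add: algebra_simps)
lemma graph_closed: "closed (graph T D)"
  using ddc by (auto simp: densely_defined_closed_def)

lemma graph_rsub: "rsub (graph T D)"
  unfolding rsub_def
proof (intro conjI ballI allI graph_closed)
  show "0 \<in> graph T D" unfolding graph_def using D_zero T_zero by (auto intro!: exI[of _ 0] simp: zero_prod_def)
  fix a b assume "a \<in> graph T D" "b \<in> graph T D"
  then obtain x y where "x \<in> D" "y \<in> D" "a = (T x, x)" "b = (T y, y)" by (auto simp: graph_def)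
  then show "a + b \<in> graph T D" unfolding graph_def
    by (auto intro!: exI[of _ "x + y"] simp: T_add D_add)
next
  fix r a assume "a \<in> graph T D"
  then obtain x where "x \<in> D" "a = (T x, x)" by (auto simp: graph_def)
  then show "r *\<^sub>R a \<in> graph T D" unfolding graph_def
    by (auto intro!: exI[of _ "r *\<^sub>R x"] simp: T_scaleR D_scaleR)
qed

definition "U = {norm (T x) | x. x \<in> D \<and> norm x = 1}"

lemma U_bdd: "bdd_below U"
  unfolding U_def by (rule bdd_belowI[of _ 0]) auto

lemma mm_le: "x \<in> D \<Longrightarrow> norm x = 1 \<Longrightarrow> min_modulus T D \<le> norm (T x)"
  unfolding min_modulus_def U_def[symmetric] by (rule cInf_lower[OF _ U_bdd]) (auto simp: U_def)

lemma mm_lower: assumes x: "x \<in> D" shows "min_modulus T D * norm x \<le> norm (T x)"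
proof (cases "x = 0")
  case True then show ?thesis by (simp add: T_zero)
next
  case False
  define x' where "x' = (1 / norm x) *\<^sub>R x"
  have "x' \<in> D" unfolding x'_def by (rule D_scaleR[OF x])
  moreover have "norm x' = 1" using False by (simp add: x'_def)
  ultimately have "min_modulus T D \<le> norm (T x')" by (rule mm_le)
  also have "norm (T x') = norm (T x) / norm x" using False by (simp add: x'_def T_scaleR[OF x])
  finally show ?thesis using False by (simp add: field_simps)
qed

lemma exists_unit:
  assumes "infinite_dimensional TYPE('a)"
  shows "\<exists>x\<in>D. norm x = 1"
proof -
  obtain a :: 'a where a: "a \<noteq> 0"
  proof (rule ccontr)
    assume "\<not> thesis"
    with that have "\<forall>a::'a. a = 0" by blast
    then have "span ({}::'a set) = UNIV" by auto
    with assms show False unfolding infinite_dimensional_def by blast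
  qed
  have "\<exists>d\<in>D. d \<noteq> 0"
  proof (rule ccontr)
    assume "\<not> ?thesis"
    then have "D \<subseteq> {0}" by auto
    then have "closure D \<subseteq> {0}" using closure_mono[of D "{0}"] by simp
    with D_dense a show False by auto
  qed
  then obtain d where d: "d \<in> D" "d \<noteq> 0" by blast
  show ?thesis
    by (intro bexI[of _ "(1 / norm d) *\<^sub>R d"] D_scaleR d) (use d in simp)
qed

lemma U_ne: "infinite_dimensional TYPE('a) \<Longrightarrow> U \<noteq> {}"
  using exists_unit unfolding U_def by auto

lemma mm_nonneg: "infinite_dimensional TYPE('a) \<Longrightarrow> 0 \<le> min_modulus T D"
  unfolding min_modulus_def U_def[symmetric] by (rule cInf_greatest[OF U_ne]) (auto simp: U_def)

lemma near_min:
  assumes "infinite_dimensional TYPE('a)" "\<delta> > 0"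
  shows "\<exists>p\<in>D. norm p = 1 \<and> norm (T p) < min_modulus T D + \<delta>"
proof -
  have "Inf U < min_modulus T D + \<delta>" using assms by (simp add: min_modulus_def U_def)
  from cInf_lessD[OF U_ne[OF assms(1)] this] show ?thesis by (auto simp: U_def)
qed

end

definition Sop :: "'a::complex_hilbert \<Rightarrow> 'b::complex_hilbert \<Rightarrow> 'a \<Rightarrow> 'b" where
  "Sop p v = (\<lambda>x. phi p x *\<^sub>C v)"

lemma Sop_add: "Sop p v (x + y) = Sop p v x + Sop p v y"
  by (simp add: Sop_def phi_add scaleC_add_left)

lemma Sop_scaleC: "Sop p v (c *\<^sub>C x) = c *\<^sub>C Sop p v x"
  by (simp add: Sop_def phi_scaleC scaleC_scaleC)

lemma Sop_norm: assumes "norm p = 1" shows "norm (Sop p v x) \<le> norm v * norm x"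
proof -
  have "norm (Sop p v x) = cmod (phi p x) * norm v" by (simp add: Sop_def norm_scaleC)
  also have "\<dots> \<le> norm x * norm v" by (intro mult_right_mono norm_phi assms) simp
  finally show ?thesis by (simp add: mult.commute)
qed

lemma Sop_bcl: assumes "norm p = 1" shows "bounded_clinear_op (Sop p v)"
  unfolding bounded_clinear_op_def
  using Sop_add Sop_scaleC Sop_norm[OF assms] by (metis mult.commute)

lemma Sop_onorm: assumes "norm p = 1" shows "onorm (Sop p v) \<le> norm v"
  by (rule onorm_bound) (auto intro: Sop_norm[OF assms])

lemma Sop_p: assumes "norm p = 1" shows "Sop p v p = v"
  by (simp add: Sop_def phi_self[OF assms] scaleC_one)

lemma Sop_rank: assumes "norm p = 1" "v \<noteq> 0" shows "rank_one (Sop p v)"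
  unfolding rank_one_def
proof (intro exI conjI)
  show "v \<noteq> 0" by fact
  show "range (Sop p v) = {c *\<^sub>C v | c. True}"
  proof
    show "range (Sop p v) \<subseteq> {c *\<^sub>C v | c. True}" by (auto simp: Sop_def)
    show "{c *\<^sub>C v | c. True} \<subseteq> range (Sop p v)"
    proof
      fix w assume "w \<in> {c *\<^sub>C v | c. True}"
      then obtain c where w: "w = c *\<^sub>C v" by auto
      have "Sop p v (c *\<^sub>C p) = w" by (simp add: Sop_def phi_scaleC phi_self[OF assms(1)] w)
      then show "w \<in> range (Sop p v)" by (metis rangeI)
    qed
  qed
qed

context ddc begin

lemma riesz:
  assumes m: "min_modulus T D > 0" and p: "p \<in> D" "norm p = 1"
  shows "\<exists>u\<in>D. \<forall>y\<in>D. inner (T u) (T y) = inner p y"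
proof -
  define N where "N = {T y | y. y \<in> D \<and> inner p y = 0}"
  have NN: "rsub N"
    unfolding rsub_def
  proof (intro conjI ballI allI)
    show "0 \<in> N" unfolding N_def using D_zero T_zero by (auto intro!: exI[of _ 0])
  next
    fix a b assume "a \<in> N" "b \<in> N"
    then obtain x y where "x \<in> D" "y \<in> D" "inner p x = 0" "inner p y = 0" "a = T x" "b = T y"
      by (auto simp: N_def)
    then show "a + b \<in> N" unfolding N_def
      by (auto intro!: exI[of _ "x + y"] simp: T_add D_add inner_add_right)
  next
    fix r a assume "a \<in> N"
    then obtain x where "x \<in> D" "inner p x = 0" "a = T x" by (auto simp: N_def)
    then show "r *\<^sub>R a \<in> N" unfolding N_def
      by (auto intro!: exI[of _ "r *\<^sub>R x"] simp: T_scaleR D_scaleR)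
  next
    show "closed N" unfolding closed_sequential_limits
    proof (intro allI impI, elim conjE)
      fix s l assume sN: "\<forall>n. s n \<in> N" and sl: "s \<longlonglongrightarrow> l"
      then have "\<forall>n. \<exists>y. y \<in> D \<and> inner p y = 0 \<and> s n = T y" by (auto simp: N_def)
      then obtain y where y: "\<And>n. y n \<in> D" "\<And>n. inner p (y n) = 0" "\<And>n. s n = T (y n)"
        by metis
      have CT: "Cauchy s" using sl by (rule LIMSEQ_imp_Cauchy)
      have "Cauchy y"
      proof (rule metric_CauchyI)
        fix e :: real assume e: "e > 0"
        have "e * min_modulus T D > 0" using e m by simp
        from metric_CauchyD[OF CT this] obtain M where
          M: "\<forall>a\<ge>M. \<forall>b\<ge>M. dist (s a) (s b) < e * min_modulus T D" by blast
        show "\<exists>M. \<forall>a\<ge>M. \<forall>b\<ge>M. dist (y a) (y b) < e"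
        proof (intro exI allI impI)
          fix a b assume ab: "M \<le> a" "M \<le> b"
          have "min_modulus T D * norm (y a - y b) \<le> norm (T (y a - y b))"
            by (rule mm_lower) (intro D_diff y)
          also have "\<dots> = dist (s a) (s b)" by (simp add: y(3) T_diff y(1) dist_norm)
          also have "\<dots> < e * min_modulus T D" using M ab by blast
          finally show "dist (y a) (y b) < e" using m by (simp add: dist_norm mult.commute)
        qed
      qed
      then obtain y0 where y0: "y \<longlonglongrightarrow> y0" using Cauchy_convergent_iff convergent_def by blast
      have "(\<lambda>n. (s n, y n)) \<longlonglongrightarrow> (l, y0)" by (rule tendsto_Pair[OF sl y0])
      moreover have "\<forall>n. (s n, y n) \<in> graph T D" using y by (auto simp: graph_def)
      ultimately have "(l, y0) \<in> graph T D"
        using graph_closed[unfolded closed_sequential_limits, rule_format, of "\<lambda>n. (s n, y n)" "(l, y0)"] by blast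
      then have y0D: "y0 \<in> D" and l: "l = T y0" by (auto simp: graph_def)
      have "(\<lambda>n. inner p (y n)) \<longlonglongrightarrow> inner p y0" by (intro tendsto_intros y0)
      then have "inner p y0 = 0" using y(2) by (simp add: LIMSEQ_const_iff)
      then show "l \<in> N" using y0D l by (auto simp: N_def)
    qed
  qed
  define n where "n = orth_proj N (T p)"
  have nN: "n \<in> N" and no: "\<And>z. z \<in> N \<Longrightarrow> inner (T p - n) z = 0"
    using orth_proj[OF NN] by (auto simp: n_def)
  obtain y1 where y1: "y1 \<in> D" "inner p y1 = 0" "n = T y1" using nN by (auto simp: N_def)
  define r where "r = T p - n"
  have r: "r = T (p - y1)" using y1 p by (simp add: r_def T_diff)
  have pp: "inner p p = 1" using p(2) by (simp flip: power2_norm_eq_inner)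
  have r0: "r \<noteq> 0"
  proof
    assume "r = 0"
    then have "min_modulus T D * norm (p - y1) \<le> 0" using mm_lower[OF D_diff[OF p(1) y1(1)]] r by simp
    then have "p = y1" using m by (simp add: mult_le_0_iff)
    then show False using pp y1(2) by simp
  qed
  have key: "inner r (T y) = inner p y * (norm r)\<^sup>2" if y: "y \<in> D" for y
  proof -
    have "T y - inner p y *\<^sub>R T p \<in> N"
      unfolding N_def using y p pp
      by (auto intro!: exI[of _ "y - inner p y *\<^sub>R p"] simp: T_diff T_scaleR D_diff D_scaleR inner_diff_right)
    then have "inner r (T y - inner p y *\<^sub>R T p) = 0" using no unfolding r_def by blast
    moreover have "inner r (T p) = (norm r)\<^sup>2"
    proof -
      have "T p = r + n" by (simp add: r_def)
      then have "inner r (T p) = inner r r + inner r n" by (simp add: inner_add_right)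
      also have "inner r n = 0" using no[OF nN] by (simp add: r_def)
      finally show ?thesis by (simp add: power2_norm_eq_inner)
    qed
    ultimately show ?thesis by (simp add: inner_diff_right)
  qed
  define u where "u = (1 / (norm r)\<^sup>2) *\<^sub>R (p - y1)"
  show ?thesis
  proof (intro bexI ballI)
    show "u \<in> D" unfolding u_def by (intro D_scaleR D_diff p y1)
    fix y assume y: "y \<in> D"
    have "T u = (1 / (norm r)\<^sup>2) *\<^sub>R r" unfolding u_def r by (simp add: T_scaleR D_diff p y1)
    then show "inner (T u) (T y) = inner p y" using key[OF y] r0 by simp
  qed
qed

end

context ddc begin

lemma gap_pert:
  assumes Sadd: "\<And>x y. S (x + y) = S x + S y" and Ssc: "\<And>c x. S (c *\<^sub>C x) = c *\<^sub>C S x"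
    and Sb: "\<And>x. norm (S x) \<le> e * norm x" and e: "e \<ge> 0"
  shows "gap (\<lambda>x. S x + T x) D T D \<le> e"
proof -
  have SR: "S (r *\<^sub>R x) = r *\<^sub>R S x" for r x using Ssc by (simp add: scaleR_scaleC)
  have bl: "bounded_linear S"
    by (rule bounded_linear_intro[of S e]) (auto simp: Sadd SR Sb mult.commute)
  have S0: "S 0 = 0" using SR[of 0 0] by simp
  let ?G1 = "graph (\<lambda>x. S x + T x) D"
  have G1: "rsub ?G1"
    unfolding rsub_def
  proof (intro conjI ballI allI)
    show "0 \<in> ?G1" unfolding graph_def using D_zero T_zero S0
      by (auto intro!: exI[of _ 0] simp: zero_prod_def)
  next
    fix a b assume "a \<in> ?G1" "b \<in> ?G1"
    then obtain x y where "x \<in> D" "y \<in> D" "a = (S x + T x, x)" "b = (S y + T y, y)"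
      by (auto simp: graph_def)
    then show "a + b \<in> ?G1" unfolding graph_def
      by (auto intro!: exI[of _ "x + y"] simp: T_add D_add Sadd)
  next
    fix r a assume "a \<in> ?G1"
    then obtain x where "x \<in> D" "a = (S x + T x, x)" by (auto simp: graph_def)
    then show "r *\<^sub>R a \<in> ?G1" unfolding graph_def
      by (auto intro!: exI[of _ "r *\<^sub>R x"] simp: T_scaleR D_scaleR SR scaleR_add_right)
  next
    show "closed ?G1" unfolding closed_sequential_limits
    proof (intro allI impI, elim conjE)
      fix w l assume wG: "\<forall>n. w n \<in> ?G1" and wl: "w \<longlonglongrightarrow> l"
      then have "\<forall>n. \<exists>x. x \<in> D \<and> w n = (S x + T x, x)" by (auto simp: graph_def)
      then obtain x where x: "\<And>n. x n \<in> D" "\<And>n. w n = (S (x n) + T (x n), x n)" by metis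
      obtain a b where l: "l = (a, b)" by (cases l)
      have xb: "x \<longlonglongrightarrow> b" using tendsto_snd[OF wl] by (simp add: x(2) l)
      have Sx: "(\<lambda>n. S (x n)) \<longlonglongrightarrow> S b" by (rule bounded_linear.tendsto[OF bl xb])
      have "(\<lambda>n. S (x n) + T (x n)) \<longlonglongrightarrow> a" using tendsto_fst[OF wl] by (simp add: x(2) l)
      then have "(\<lambda>n. (S (x n) + T (x n)) - S (x n)) \<longlonglongrightarrow> a - S b" by (intro tendsto_diff Sx)
      then have Tx: "(\<lambda>n. T (x n)) \<longlonglongrightarrow> a - S b" by simp
      have "(\<lambda>n. (T (x n), x n)) \<longlonglongrightarrow> (a - S b, b)" by (rule tendsto_Pair[OF Tx xb])
      moreover have "\<forall>n. (T (x n), x n) \<in> graph T D" using x by (auto simp: graph_def)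
      ultimately have "(a - S b, b) \<in> graph T D"
        using graph_closed[unfolded closed_sequential_limits, rule_format,
            of "\<lambda>n. (T (x n), x n)" "(a - S b, b)"] by blast
      then have "b \<in> D" "a - S b = T b" by (auto simp: graph_def)
      then show "l \<in> ?G1" unfolding graph_def l
        by (auto intro!: exI[of _ b] simp: algebra_simps)
    qed
  qed
  show ?thesis unfolding gap_def
  proof (rule gap_abstract[OF G1 graph_rsub e])
    fix w assume "w \<in> ?G1"
    then obtain x where x: "x \<in> D" "w = (S x + T x, x)" by (auto simp: graph_def)
    show "\<exists>g\<in>graph T D. norm (w - g) \<le> e * norm w"
    proof
      show "(T x, x) \<in> graph T D" using x by (auto simp: graph_def)
      have "norm (w - (T x, x)) = norm (S x)" using x by (simp add: norm_Pair)
      also have "\<dots> \<le> e * norm x" by (rule Sb)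
      also have "\<dots> \<le> e * norm w" using x e by (intro mult_left_mono) (simp_all add: norm_snd_le)
      finally show "norm (w - (T x, x)) \<le> e * norm w" .
    qed
  next
    fix w assume "w \<in> graph T D"
    then obtain x where x: "x \<in> D" "w = (T x, x)" by (auto simp: graph_def)
    show "\<exists>g\<in>?G1. norm (w - g) \<le> e * norm w"
    proof
      show "(S x + T x, x) \<in> ?G1" using x by (auto simp: graph_def)
      have "norm (w - (S x + T x, x)) = norm (S x)" using x by (simp add: norm_Pair)
      also have "\<dots> \<le> e * norm x" by (rule Sb)
      also have "\<dots> \<le> e * norm w" using x e by (intro mult_left_mono) (simp_all add: norm_snd_le)
      finally show "norm (w - (S x + T x, x)) \<le> e * norm w" .
    qed
  qed
qed

lemma zero_case:
  assumes p: "p \<in> D" "norm p = 1" and e: "norm (T p) \<le> \<epsilon>"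
  shows "\<exists>S. bounded_clinear_op S \<and> onorm S \<le> \<epsilon> \<and>
              min_attaining (\<lambda>x. S x + T x) D \<and> gap (\<lambda>x. S x + T x) D T D \<le> \<epsilon>"
proof (intro exI conjI)
  let ?S = "Sop p (- T p)"
  show "bounded_clinear_op ?S" by (rule Sop_bcl[OF p(2)])
  show "onorm ?S \<le> \<epsilon>" using Sop_onorm[OF p(2), of "- T p"] e by simp
  have Bp: "?S p + T p = 0" by (simp add: Sop_p[OF p(2)])
  have "min_modulus (\<lambda>x. ?S x + T x) D = 0"
    unfolding min_modulus_def by (rule cInf_eq_minimum) (use p Bp in auto)
  then show "min_attaining (\<lambda>x. ?S x + T x) D" unfolding min_attaining_def using p Bp by auto
  have e0: "\<epsilon> \<ge> 0" using e norm_ge_zero order_trans by blast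
  show "gap (\<lambda>x. ?S x + T x) D T D \<le> \<epsilon>"
  proof (rule gap_pert[OF Sop_add Sop_scaleC _ e0])
    fix x
    have "norm (?S x) \<le> norm (- T p) * norm x" by (rule Sop_norm[OF p(2)])
    also have "\<dots> \<le> \<epsilon> * norm x" using e by (intro mult_right_mono) auto
    finally show "norm (?S x) \<le> \<epsilon> * norm x" .
  qed
qed

end

context ddc begin

lemma hard_case:
  assumes inf: "infinite_dimensional TYPE('a)" and mpos: "min_modulus T D > 0" and \<epsilon>: "\<epsilon> > 0"
  shows "\<exists>S. bounded_clinear_op S \<and> rank_one S \<and> onorm S \<le> \<epsilon> \<and>
              min_attaining (\<lambda>x. S x + T x) D \<and> gap (\<lambda>x. S x + T x) D T D \<le> \<epsilon>"
proof -
  define m where "m = min_modulus T D"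
  have m0: "m > 0" using mpos by (simp add: m_def)
  define \<eta> where "\<eta> = (\<epsilon> / 2)\<^sup>2"
  define \<delta> where "\<delta> = min 1 (\<eta> / (2 * m + 1))"
  have \<eta>0: "\<eta> > 0" using \<epsilon> by (simp add: \<eta>_def)
  have \<delta>0: "\<delta> > 0" using \<eta>0 m0 by (simp add: \<delta>_def)
  obtain p where p: "p \<in> D" "norm p = 1" "norm (T p) < m + \<delta>"
    using near_min[OF inf \<delta>0] by (auto simp: m_def)
  have Tp2: "(norm (T p))\<^sup>2 \<le> m\<^sup>2 + \<eta>"
  proof -
    have "(norm (T p))\<^sup>2 \<le> (m + \<delta>)\<^sup>2" using p(3) by (intro power_mono) auto
    also have "\<dots> = m\<^sup>2 + \<delta> * (2 * m + \<delta>)" by (simp add: power2_eq_square algebra_simps)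
    also have "\<dots> \<le> m\<^sup>2 + \<delta> * (2 * m + 1)"
      using \<delta>0 by (intro add_left_mono mult_left_mono) (auto simp: \<delta>_def)
    also have "\<delta> * (2 * m + 1) \<le> \<eta>"
    proof -
      have "\<delta> \<le> \<eta> / (2 * m + 1)" by (simp add: \<delta>_def)
      then show ?thesis using m0 by (simp add: pos_le_divide_eq)
    qed
    finally show ?thesis by simp
  qed
  obtain u where u: "u \<in> D" "\<And>y. y \<in> D \<Longrightarrow> inner (T u) (T y) = inner p y"
    using riesz[OF mpos p(1) p(2)] by blast
  have pp: "inner p p = 1" using p(2) by (simp flip: power2_norm_eq_inner)
  have h1: "inner (T u) (T p) = 1" using u(2)[OF p(1)] pp by simp
  define k where "k = norm (T u)"
  have Tu0: "T u \<noteq> 0" using h1 by auto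
  have k0: "k > 0" using Tu0 by (simp add: k_def)
  have mk: "m * k \<le> 1"
  proof -
    have "k\<^sup>2 = inner p u" using u(2)[OF u(1)] by (simp add: k_def power2_norm_eq_inner inner_commute)
    also have "\<dots> \<le> norm p * norm u" by (rule order_trans[OF abs_ge_self Cauchy_Schwarz_ineq2])
    also have "\<dots> = norm u" using p(2) by simp
    finally have "m * k\<^sup>2 \<le> m * norm u" using m0 by (intro mult_left_mono) auto
    also have "m * norm u \<le> k" using mm_lower[OF u(1)] by (simp add: m_def k_def)
    finally have "(m * k) * k \<le> 1 * k" by (simp add: power2_eq_square algebra_simps)
    then show ?thesis using k0 by (simp add: mult_le_cancel_right)
  qed
  have nv: "(norm (a *\<^sub>R T u - T p))\<^sup>2 = a\<^sup>2 * k\<^sup>2 - 2 * a + (norm (T p))\<^sup>2" for a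
  proof -
    have "a *\<^sub>R T u - T p = a *\<^sub>R T u + (- T p)" by simp
    then have "(norm (a *\<^sub>R T u - T p))\<^sup>2 = (norm (a *\<^sub>R T u))\<^sup>2 + (norm (- T p))\<^sup>2 + 2 * inner (a *\<^sub>R T u) (- T p)"
      by (simp only: norm_add_sq)
    also have "\<dots> = a\<^sup>2 * k\<^sup>2 - 2 * a + (norm (T p))\<^sup>2"
      by (simp add: h1 inner_minus_right power_mult_distrib k_def)
    finally show ?thesis .
  qed
  define c0 where "c0 = m / k"
  have c0k: "c0 * k = m" using k0 by (simp add: c0_def)
  have c00: "c0 > 0" using m0 k0 by (simp add: c0_def)
  have v0: "norm (c0 *\<^sub>R T u - T p) \<le> \<epsilon> / 2"
  proof -
    have mmk: "m * m \<le> c0"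
    proof -
      have "m * m * k \<le> m" using mk m0 by (metis mult.assoc mult_left_mono mult.right_neutral less_imp_le)
      then show ?thesis using k0 by (simp add: c0_def pos_le_divide_eq)
    qed
    have "(norm (c0 *\<^sub>R T u - T p))\<^sup>2 = (c0 * k)\<^sup>2 - 2 * c0 + (norm (T p))\<^sup>2"
      unfolding nv by (simp add: power_mult_distrib)
    also have "\<dots> \<le> (\<epsilon> / 2)\<^sup>2" using c0k mmk Tp2 by (simp add: \<eta>_def power2_eq_square)
    finally show ?thesis by (rule power2_le_imp_le) (use \<epsilon> in simp)
  qed
  define d' where "d' = \<epsilon> / (2 * m + \<epsilon>)"
  have d'0: "0 < d'" "d' < 1" using \<epsilon> m0 by (auto simp: d'_def field_simps)
  have md': "m * d' \<le> \<epsilon> / 2"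
    using \<epsilon> m0 by (simp add: d'_def field_simps)
  define c1 where "c1 = c0 * (1 - d')"
  have v1e: "c1 *\<^sub>R T u - T p = (c0 *\<^sub>R T u - T p) - (c0 * d') *\<^sub>R T u"
    by (simp add: c1_def algebra_simps)
  have v1: "norm (c1 *\<^sub>R T u - T p) \<le> \<epsilon>"
  proof -
    have "norm (c1 *\<^sub>R T u - T p) \<le> norm (c0 *\<^sub>R T u - T p) + norm ((c0 * d') *\<^sub>R T u)"
      unfolding v1e by (rule norm_triangle_ineq4)
    also have "norm ((c0 * d') *\<^sub>R T u) = m * d'"
      using c00 d'0 c0k by (simp add: k_def[symmetric] algebra_simps)
    finally show ?thesis using v0 md' by linarith
  qed
  define c where "c = (if c0 *\<^sub>R T u - T p = 0 then c1 else c0)"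
  define v where "v = c *\<^sub>R T u - T p"
  have v_ne: "v \<noteq> 0"
  proof (cases "c0 *\<^sub>R T u - T p = 0")
    case True
    then have "v = - ((c0 * d') *\<^sub>R T u)" unfolding v_def c_def using v1e by simp
    moreover have "c0 * d' \<noteq> 0" using c00 d'0 by simp
    ultimately show ?thesis using Tu0 by simp
  next
    case False then show ?thesis by (simp add: v_def c_def)
  qed
  have v\<epsilon>: "norm v \<le> \<epsilon>" unfolding v_def c_def using v0 v1 \<epsilon> by auto
  have c_nn: "0 \<le> c" and ck: "c * k \<le> m"
    using c00 d'0 c0k k0 by (auto simp: c_def c1_def algebra_simps mult_le_cancel_left1)
  define S where "S = Sop p v"
  have Bp: "S p + T p = c *\<^sub>R T u" by (simp add: S_def Sop_p[OF p(2)] v_def)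
  have nBp: "norm (S p + T p) = c * k" unfolding Bp using c_nn by (simp add: k_def)
  have low: "c * k * norm x \<le> norm (S x + T x)" if x: "x \<in> D" for x
  proof -
    define \<alpha> where "\<alpha> = phi p x"
    define y where "y = x - \<alpha> *\<^sub>C p"
    have yD: "y \<in> D" by (simp add: y_def D_diff D_scaleC x p(1))
    have xe: "x = \<alpha> *\<^sub>C p + y" by (simp add: y_def)
    have Tx: "T x = \<alpha> *\<^sub>C T p + T y"
      using T_add[OF D_scaleC[OF p(1)] yD, of \<alpha>] T_scaleC[OF p(1), of \<alpha>] xe by simp
    have Sx: "S x = \<alpha> *\<^sub>C v" by (simp add: S_def Sop_def \<alpha>_def)
    have Bx: "S x + T x = \<alpha> *\<^sub>C (c *\<^sub>R T u) + T y"
      unfolding Sx Tx by (simp add: v_def scaleC_diff_right scaleC_scaleR algebra_simps)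
    have orth: "inner (\<alpha> *\<^sub>C p) y = 0" unfolding y_def \<alpha>_def by (rule inner_scaleC_p_orth[OF p(2)])
    have cross: "inner (\<alpha> *\<^sub>C (c *\<^sub>R T u)) (T y) = 0"
    proof -
      have "inner (\<alpha> *\<^sub>C (c *\<^sub>R T u)) (T y) = c * inner (\<alpha> *\<^sub>C T u) (T y)"
        by (simp add: scaleC_scaleR)
      also have "inner (\<alpha> *\<^sub>C T u) (T y) = inner (T u) (cnj \<alpha> *\<^sub>C T y)" by (rule inner_scaleC_left)
      also have "cnj \<alpha> *\<^sub>C T y = T (cnj \<alpha> *\<^sub>C y)" by (simp add: T_scaleC yD)
      also have "inner (T u) (T (cnj \<alpha> *\<^sub>C y)) = inner p (cnj \<alpha> *\<^sub>C y)" by (rule u(2)) (simp add: D_scaleC yD)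
      also have "inner p (cnj \<alpha> *\<^sub>C y) = inner (\<alpha> *\<^sub>C p) y" by (simp add: inner_scaleC_left)
      finally show ?thesis using orth by simp
    qed
    have nx: "(norm x)\<^sup>2 = (cmod \<alpha>)\<^sup>2 + (norm y)\<^sup>2"
      unfolding xe norm_add_sq orth by (simp add: norm_scaleC p(2))
    have nB: "(norm (S x + T x))\<^sup>2 = (cmod \<alpha> * (c * k))\<^sup>2 + (norm (T y))\<^sup>2"
      unfolding Bx norm_add_sq cross using c_nn by (simp add: norm_scaleC k_def)
    have Ty: "(m * norm y)\<^sup>2 \<le> (norm (T y))\<^sup>2"
      using mm_lower[OF yD] m0 by (intro power_mono) (auto simp: m_def)
    have ck2: "(c * k)\<^sup>2 \<le> m\<^sup>2" using ck c_nn k0 by (intro power_mono) auto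
    have "(c * k * norm x)\<^sup>2 = (cmod \<alpha> * (c * k))\<^sup>2 + (c * k)\<^sup>2 * (norm y)\<^sup>2"
      by (simp add: power_mult_distrib nx algebra_simps)
    also have "\<dots> \<le> (cmod \<alpha> * (c * k))\<^sup>2 + m\<^sup>2 * (norm y)\<^sup>2"
      using ck2 by (intro add_left_mono mult_right_mono) auto
    also have "\<dots> \<le> (norm (S x + T x))\<^sup>2" unfolding nB using Ty by (simp add: power_mult_distrib)
    finally show ?thesis by (rule power2_le_imp_le) simp
  qed
  have "min_modulus (\<lambda>x. S x + T x) D = c * k"
    unfolding min_modulus_def
  proof (rule cInf_eq_minimum)
    show "c * k \<in> {norm (S x + T x) |x. x \<in> D \<and> norm x = 1}" using p nBp by (auto intro!: exI[of _ p])
    fix z assume "z \<in> {norm (S x + T x) |x. x \<in> D \<and> norm x = 1}"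
    then obtain x where "x \<in> D" "norm x = 1" "z = norm (S x + T x)" by auto
    then show "c * k \<le> z" using low[of x] by simp
  qed
  then have ma: "min_attaining (\<lambda>x. S x + T x) D" unfolding min_attaining_def using p nBp by auto
  have Sb: "norm (S x) \<le> \<epsilon> * norm x" for x
  proof -
    have "norm (S x) \<le> norm v * norm x" unfolding S_def by (rule Sop_norm[OF p(2)])
    also have "\<dots> \<le> \<epsilon> * norm x" using v\<epsilon> by (intro mult_right_mono) auto
    finally show ?thesis .
  qed
  have "gap (\<lambda>x. S x + T x) D T D \<le> \<epsilon>"
    by (rule gap_pert[OF _ _ Sb]) (use \<epsilon> in \<open>auto simp: S_def Sop_add Sop_scaleC\<close>)
  moreover have "onorm S \<le> \<epsilon>" using Sop_onorm[OF p(2), of v] v\<epsilon> by (simp add: S_def)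
  ultimately show ?thesis
    using ma Sop_bcl[OF p(2), of v] Sop_rank[OF p(2) v_ne] by (auto simp: S_def)
qed

end

theorem theorem3p5:
  fixes T :: "'a::complex_hilbert \<Rightarrow> 'b::complex_hilbert" and D :: "'a set" and \<epsilon> :: real
  assumes "infinite_dimensional TYPE('a)" and "infinite_dimensional TYPE('b)"
    and "densely_defined_closed T D"
    and "\<epsilon> > 0"
  shows "(\<exists>S. bounded_clinear_op S \<and> onorm S \<le> \<epsilon> \<and>
              min_attaining (\<lambda>x. S x + T x) D \<and> gap (\<lambda>x. S x + T x) D T D \<le> \<epsilon>)
       \<and> (min_modulus T D > 0 \<longrightarrow>
            (\<exists>S. bounded_clinear_op S \<and> rank_one S \<and> onorm S \<le> \<epsilon> \<and>
              min_attaining (\<lambda>x. S x + T x) D \<and> gap (\<lambda>x. S x + T x) D T D \<le> \<epsilon>))"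
proof -
  interpret ddc T D by unfold_locales (rule assms(3))
  have m0: "0 \<le> min_modulus T D" by (rule mm_nonneg[OF assms(1)])
  show ?thesis
  proof (cases "min_modulus T D > 0")
    case True
    from hard_case[OF assms(1) True assms(4)] show ?thesis by blast
  next
    case False
    then have mz: "min_modulus T D = 0" using m0 by simp
    obtain p where p: "p \<in> D" "norm p = 1" "norm (T p) < min_modulus T D + \<epsilon>"
      using near_min[OF assms(1) assms(4)] by blast
    have "norm (T p) \<le> \<epsilon>" using p(3) mz by simp
    from zero_case[OF p(1) p(2) this] show ?thesis using False by blast
  qed
qed

end
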